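(* Consider the following communication system. A $k$-bit binary information sequence is CRC-encoded with degree-$m$ generator polynomial $p(x)$ into an $n=k+m$ bit sequence divisible by $p(x)$, which (with $v$ zero termination bits) is encoded by a feedforward rate-$1/N$ convolutional code with $v$ memory elements and sent by QPSK over an AWGN channel with symbol SNR $\gamma_s=E_s/N_0$. The receiver uses serial list Viterbi decoding (S-LVA): codewords are output in order of increasing soft Viterbi metric relative to the received sequence, and decoding stops at the first codeword whose input sequence is divisible by $p(x)$. Let $N_{\mathrm{LVA}}$ be the index of the decoding trial at which the CRC check first passes, and for a list size $L$ let $P^{L}_{\mathrm{NACK}}=\Pr\{N_{\mathrm{LVA}}>L\}$ be the erasure probability (no codeword among the first $L$ passes the CRC). Then, as $\gamma_s\to\infty$, $P^{L}_{\mathrm{NACK}}\le \frac{1}{L}$ (i.e., $\limsup_{\gamma_s\to\infty}P^L_{\mathrm{NACK}}\le 1/L$).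
   Context: $\gamma_s$ is measured in dB; $\gamma_s\to\infty$ means the SNR tends to infinity. Probabilities are over the channel noise. *)

theory Defs
  imports "HOL-Probability.Probability" "HOL-Library.Z2" "HOL-Computational_Algebra.Polynomial"
begin

text \<open>Binary sequences are polynomials over GF(2) (type bit poly); the bit at time t is coeff w t.\<close>

definition bit_seqs :: "nat \<Rightarrow> bit poly set" where
  "bit_seqs n = {w. \<forall>i\<ge>n. coeff w i = 0}"

definition crc_encode :: "bit poly \<Rightarrow> nat \<Rightarrow> bit poly \<Rightarrow> bit poly" where
  "crc_encode p m d = d * monom 1 m - (d * monom 1 m) mod p"

text \<open>Feedforward rate 1/N convolutional encoder with generator polynomials g 0, ..., g (N-1)
  (degree at most v, i.e. v memory elements).  The input is the n-bit sequence w followed by v zero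
  termination bits; branch j outputs the n+v bits of w(x) g_j(x).\<close>
definition coded_index :: "nat \<Rightarrow> nat \<Rightarrow> nat \<Rightarrow> (nat \<times> nat) set" where
  "coded_index n v N = {..<n+v} \<times> {..<N}"

definition conv_bit :: "(nat \<Rightarrow> bit poly) \<Rightarrow> bit poly \<Rightarrow> nat \<times> nat \<Rightarrow> bit" where
  "conv_bit g w tj = coeff (w * g (snd tj)) (fst tj)"

definition snr_lin :: "real \<Rightarrow> real" where
  "snr_lin gdB = 10 powr (gdB / 10)"

text \<open>Gray-mapped QPSK with N0 = 1 and Es = snr: each coded bit is carried by one real dimension
  (in-phase or quadrature) with amplitude +- sqrt(Es/2); bit 0 maps to +, bit 1 to -.\<close>
definition modulate :: "real \<Rightarrow> (nat \<Rightarrow> bit poly) \<Rightarrow> bit poly \<Rightarrow> nat \<times> nat \<Rightarrow> real" where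
  "modulate gdB g w tj = sqrt (snr_lin gdB / 2) * (if conv_bit g w tj = 1 then -1 else 1)"

text \<open>AWGN: independent real Gaussian noise of variance N0/2 = 1/2 in each real dimension.\<close>
definition noise_measure :: "(nat \<times> nat) set \<Rightarrow> (nat \<times> nat \<Rightarrow> real) measure" where
  "noise_measure I = PiM I (\<lambda>_. density lborel (normal_density 0 (sqrt (1/2))))"

definition sv_metric :: "(nat \<times> nat) set \<Rightarrow> (nat \<times> nat \<Rightarrow> real) \<Rightarrow> (nat \<times> nat \<Rightarrow> real) \<Rightarrow> real" where
  "sv_metric I y x = (\<Sum>i\<in>I. (y i - x i)\<^sup>2)"

text \<open>N_LVA > L: the S-LVA lists terminated input sequences in order of increasing metric; the first
  one divisible by p has index 1 + (number of candidates with strictly smaller metric), so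
  N_LVA > L iff at least L candidates have metric strictly smaller than the best CRC-valid one.\<close>
definition nlva_exceeds ::
  "nat \<Rightarrow> nat \<Rightarrow> nat \<Rightarrow> bit poly \<Rightarrow> (nat \<Rightarrow> bit poly) \<Rightarrow> real \<Rightarrow> nat \<Rightarrow> (nat \<times> nat \<Rightarrow> real) \<Rightarrow> bool" where
  "nlva_exceeds n v N p g gdB L y =
     (let I = coded_index n v N;
          best = Min ((\<lambda>w. sv_metric I y (modulate gdB g w)) ` {w \<in> bit_seqs n. p dvd w})
      in L \<le> card {w \<in> bit_seqs n. sv_metric I y (modulate gdB g w) < best})"

definition P_nack ::
  "nat \<Rightarrow> nat \<Rightarrow> nat \<Rightarrow> bit poly \<Rightarrow> (nat \<Rightarrow> bit poly) \<Rightarrow> nat \<Rightarrow> bit poly \<Rightarrow> real \<Rightarrow> real" where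
  "P_nack n v N p g L c gdB =
     (let M = noise_measure (coded_index n v N)
      in measure M {z \<in> space M. nlva_exceeds n v N p g gdB L (\<lambda>i. modulate gdB g c i + z i)})"

end

theory Submission
  imports Defs "HOL-Real_Asymp.Real_Asymp"
begin

lemma bit_seqs_finite: "finite (bit_seqs n)"
proof -
  have sub: "bit_seqs n \<subseteq> (\<lambda>xs. Poly xs) ` {xs. set xs \<subseteq> UNIV \<and> length xs = n}"
  proof
    fix w assume w: "w \<in> bit_seqs n"
    have "w = Poly (map (coeff w) [0..<n])"
      using w by (auto simp: poly_eq_iff bit_seqs_def nth_default_def)
    then show "w \<in> (\<lambda>xs. Poly xs) ` {xs. set xs \<subseteq> UNIV \<and> length xs = n}" by force
  qed
  have "(UNIV::bit set) = {0,1}" by auto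
  then have fU: "finite (UNIV::bit set)" by (metis finite.emptyI finite_insert)
  have "finite {xs::bit list. set xs \<subseteq> UNIV \<and> length xs = n}"
    using finite_lists_length_eq[OF fU, of n] by simp
  then show ?thesis using sub by (meson finite_surj)
qed

lemma crc_props:
  assumes "n = k + m" "p \<noteq> 0" "degree p = m" "d \<in> bit_seqs k"
  shows "crc_encode p m d \<in> bit_seqs n" "p dvd crc_encode p m d"
proof -
  have "crc_encode p m d = p * (d * monom 1 m div p)"
    unfolding crc_encode_def by (metis add_diff_cancel_right' div_mult_mod_eq mult.commute)
  then show "p dvd crc_encode p m d" by simp
  show "crc_encode p m d \<in> bit_seqs n"
    unfolding bit_seqs_def crc_encode_def
  proof (intro CollectI allI impI)
    fix i assume i: "n \<le> i"
    have 1: "coeff (d * monom 1 m) i = 0"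
      using i assms by (auto simp: coeff_monom_mult mult.commute[of d] bit_seqs_def)
    have 2: "coeff ((d * monom 1 m) mod p) i = 0"
    proof (cases "(d * monom 1 m) mod p = 0")
      case False
      then have "degree ((d * monom 1 m) mod p) < m" using degree_mod_less assms by metis
      then show ?thesis using i assms by (intro coeff_eq_0) auto
    qed simp
    show "coeff (d * monom 1 m - d * monom 1 m mod p) i = 0" using 1 2 by simp
  qed
qed

lemma pt_ineq:
  fixes a z xc xw :: real
  assumes "a \<ge> 0" "xc = a \<or> xc = -a" "xw = a \<or> xw = -a" "\<bar>z\<bar> \<le> a"
  shows "z\<^sup>2 \<le> (xc + z - xw)\<^sup>2"
proof -
  have e: "(xc + z - xw)\<^sup>2 = z\<^sup>2 + (xc - xw) * (xc - xw + 2 * z)"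
    by (simp add: power2_eq_square algebra_simps)
  have "0 \<le> (xc - xw) * (xc - xw + 2 * z)"
  proof -
    have z1: "-a \<le> z" "z \<le> a" using assms(4) by auto
    show ?thesis
    proof (cases "xc = xw")
      case False
      then have "(xc = a \<and> xw = -a) \<or> (xc = -a \<and> xw = a)" using assms(2,3) by auto
      then show ?thesis
      proof
        assume h: "xc = a \<and> xw = -a"
        have "0 \<le> 2 * a" "0 \<le> 2 * a + 2 * z" using z1 assms(1) by auto
        then show ?thesis using h by (simp add: mult_nonneg_nonneg)
      next
        assume h: "xc = -a \<and> xw = a"
        have "-2 * a \<le> 0" "-2 * a + 2 * z \<le> 0" using z1 assms(1) by auto
        then have "0 \<le> (-2 * a) * (-2 * a + 2 * z)" by (rule mult_nonpos_nonpos)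
        then show ?thesis using h by simp
      qed
    qed simp
  qed
  then show ?thesis using e by linarith
qed

lemma key_incl:
  fixes z :: "nat \<times> nat \<Rightarrow> real"
  assumes "finite I" "c \<in> bit_seqs n" "p dvd c" "L \<ge> 1"
    and "I = coded_index n v N"
    and nl: "nlva_exceeds n v N p g gdB L (\<lambda>i. modulate gdB g c i + z i)"
  shows "\<exists>i\<in>I. sqrt (snr_lin gdB / 2) < \<bar>z i\<bar>"
proof (rule ccontr)
  assume "\<not> (\<exists>i\<in>I. sqrt (snr_lin gdB / 2) < \<bar>z i\<bar>)"
  then have zb: "\<And>i. i \<in> I \<Longrightarrow> \<bar>z i\<bar> \<le> sqrt (snr_lin gdB / 2)" by force
  define y where "y = (\<lambda>i. modulate gdB g c i + z i)"
  define S where "S = {w \<in> bit_seqs n. p dvd w}"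
  define met where "met = (\<lambda>w. sv_metric I y (modulate gdB g w))"
  have finS: "finite S" unfolding S_def using bit_seqs_finite by simp
  have cS: "c \<in> S" using assms unfolding S_def by simp
  have best: "Min (met ` S) \<le> met c" using finS cS by simp
  have "L \<le> card {w \<in> bit_seqs n. met w < Min (met ` S)}"
    using nl unfolding nlva_exceeds_def Let_def y_def met_def S_def assms(5) by simp
  then have "card {w \<in> bit_seqs n. met w < Min (met ` S)} \<noteq> 0" using assms(4) by linarith
  then obtain w where "met w < Min (met ` S)" by (metis (no_types, lifting) card.empty empty_Collect_eq)
  with best have lt: "met w < met c" by linarith
  have "met c = (\<Sum>i\<in>I. (z i)\<^sup>2)" unfolding met_def sv_metric_def y_def by simp
  also have "\<dots> \<le> (\<Sum>i\<in>I. (modulate gdB g c i + z i - modulate gdB g w i)\<^sup>2)"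
  proof (rule sum_mono)
    fix i assume "i \<in> I"
    show "(z i)\<^sup>2 \<le> (modulate gdB g c i + z i - modulate gdB g w i)\<^sup>2"
      by (rule pt_ineq[OF _ _ _ zb[OF \<open>i \<in> I\<close>]]) (auto simp: modulate_def snr_lin_def)
  qed
  also have "\<dots> = met w" unfolding met_def sv_metric_def y_def by simp
  finally show False using lt by linarith
qed

theorem corollary1:
  fixes k m n v N L :: nat and p :: "bit poly" and g :: "nat \<Rightarrow> bit poly" and d :: "bit poly"
  assumes "n = k + m"
    and "p \<noteq> 0" and "degree p = m"
    and "N \<ge> 1"
    and "\<forall>j<N. degree (g j) \<le> v"
    and "\<exists>j<N. g j \<noteq> 0 \<and> degree (g j) = v"
    and "d \<in> bit_seqs k"
    and "L \<ge> 1"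
  shows "Limsup at_top (\<lambda>gdB. ereal (P_nack n v N p g L (crc_encode p m d) gdB))
           \<le> ereal (1 / real L)"
proof -
  define I where "I = coded_index n v N"
  define M where "M = noise_measure I"
  define c where "c = crc_encode p m d"
  have cS: "c \<in> bit_seqs n" "p dvd c" using crc_props[OF assms(1,2,3,7)] by (auto simp: c_def)
  have PS: "prob_space M" unfolding M_def noise_measure_def
    by (intro prob_space_PiM prob_space_normal_density) auto
  then interpret prob_space M .
  have finI: "finite I" unfolding I_def coded_index_def by simp
  define B where "B a = {z \<in> space M. \<exists>i\<in>I. a < \<bar>z i\<bar>}" for a :: real
  have Bmeas: "B a \<in> sets M" for a
    unfolding B_def M_def noise_measure_def using finI by measurable
  have Bmono: "a \<le> b \<Longrightarrow> B b \<subseteq> B a" for a b unfolding B_def by force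
  have Pb: "P_nack n v N p g L c gdB \<le> measure M (B (sqrt (snr_lin gdB / 2)))" for gdB
  proof -
    have "P_nack n v N p g L c gdB = measure M {z \<in> space M. nlva_exceeds n v N p g gdB L (\<lambda>i. modulate gdB g c i + z i)}"
      unfolding P_nack_def Let_def M_def I_def by simp
    also have "\<dots> \<le> measure M (B (sqrt (snr_lin gdB / 2)))"
    proof (rule finite_measure_mono[OF _ Bmeas])
      show "{z \<in> space M. nlva_exceeds n v N p g gdB L (\<lambda>i. modulate gdB g c i + z i)} \<subseteq> B (sqrt (snr_lin gdB / 2))"
        unfolding B_def using key_incl[OF finI cS assms(8) I_def] by blast
    qed
    finally show ?thesis .
  qed
  have inter: "(\<Inter>j. B (real j)) = {}"
  proof (rule ccontr)
    assume "(\<Inter>j. B (real j)) \<noteq> {}"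
    then obtain z where z: "\<And>j. z \<in> B (real j)" by blast
    obtain j where j: "(\<Sum>i\<in>I. \<bar>z i\<bar>) < real j" using reals_Archimedean2 by blast
    from z[of j] obtain i where "i \<in> I" "real j < \<bar>z i\<bar>" unfolding B_def by blast
    moreover have "\<bar>z i\<bar> \<le> (\<Sum>i\<in>I. \<bar>z i\<bar>)" using finI \<open>i \<in> I\<close> by (intro member_le_sum) auto
    ultimately show False using j by linarith
  qed
  have lim: "(\<lambda>j. measure M (B (real j))) \<longlonglongrightarrow> 0"
  proof -
    have "(\<lambda>j. measure M (B (real j))) \<longlonglongrightarrow> measure M (\<Inter>j. B (real j))"
      by (rule finite_Lim_measure_decseq) (auto simp: Bmeas decseq_def intro!: Bmono)
    then show ?thesis using inter by simp
  qed
  have fl: "filterlim (\<lambda>x. sqrt (snr_lin x / 2)) at_top at_top"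
    unfolding snr_lin_def by real_asymp
  have tl: "((\<lambda>gdB. P_nack n v N p g L c gdB) \<longlongrightarrow> 0) at_top"
  proof (rule order_tendstoI)
    fix y :: real assume "y < 0"
    then show "\<forall>\<^sub>F x in at_top. y < P_nack n v N p g L c x"
      unfolding P_nack_def Let_def by (intro always_eventually allI) (meson less_le_trans measure_nonneg)
  next
    fix e :: real assume "0 < e"
    from order_tendstoD(2)[OF lim this] obtain j0 where j0: "measure M (B (real j0)) < e"
      unfolding eventually_sequentially by blast
    have "\<forall>\<^sub>F x in at_top. real j0 \<le> sqrt (snr_lin x / 2)"
      using fl by (auto simp: filterlim_at_top)
    then show "\<forall>\<^sub>F x in at_top. P_nack n v N p g L c x < e"
    proof (rule eventually_mono)
      fix x assume "real j0 \<le> sqrt (snr_lin x / 2)"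
      then have "measure M (B (sqrt (snr_lin x / 2))) \<le> measure M (B (real j0))"
        by (intro finite_measure_mono[OF _ Bmeas] Bmono)
      then show "P_nack n v N p g L c x < e" using Pb[of x] j0 by linarith
    qed
  qed
  have "Limsup at_top (\<lambda>gdB. ereal (P_nack n v N p g L c gdB)) = ereal 0"
    by (rule lim_imp_Limsup) (auto intro: tendsto_ereal tl)
  then show ?thesis unfolding c_def by simp
qed

end
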